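(* The pair $m=(\mathfrak L,\mathfrak R)$, where $\mathfrak L\colon\mathcal L_G\to\mathcal L_S$, $\mathfrak L(\overleftarrow e)=Se$, $\mathfrak L(r(e,u,f))=\rho(e,u,f)$, and $\mathfrak R\colon\mathcal R_G\to\mathcal R_S$, $\mathfrak R(\overrightarrow e)=eS$, $\mathfrak R(l(e,u,f))=\lambda(e,u,f)$, is an isomorphism of cross-connections from $(\mathcal R_G,\mathcal L_G;\Gamma_G)$ to $(\mathcal R_S,\mathcal L_S;\Gamma_S)$: $\mathfrak L$ and $\mathfrak R$ are isomorphisms of normal categories, and (M1) for every $(\overleftarrow e,\overrightarrow e)\in E_{\Gamma_G}$ one has $(\mathfrak L(\overleftarrow e),\mathfrak R(\overrightarrow e))=(Se,eS)\in E_{\Gamma_S}$ and $\mathfrak L(r^e(\overleftarrow g))=\rho^e(\mathfrak L(\overleftarrow g))$ for all $g\in E$; (M2) for $(\overleftarrow e,\overrightarrow e),(\overleftarrow f,\overrightarrow f)\in E_{\Gamma_G}$ and $u\in eSf$, $\mathfrak R$ maps the transpose of $r(e,u,f)$ to the transpose of $\mathfrak L(r(e,u,f))$.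
   Context: Let $S$ be a regular semigroup, $E=E(S)$. $\mathcal L_G$: objects $E/\mathscr L$ (classes $\overleftarrow e$); morphisms $\overleftarrow e\to\overleftarrow f$ the classes $r(e,u,f)$, $u\in eSf$, under $(e,u,f)\sim(g,v,h)$ iff $e\mathscr L g$, $f\mathscr L h$, $u=ev$; composition $r(e,u,f)r(f,v,g)=r(e,uv,g)$. $\mathcal R_G$: objects $E/\mathscr R$ (classes $\overrightarrow e$); morphisms $\overrightarrow e\to\overrightarrow f$ the classes $l(e,u,f)$, $u\in fSe$, under $(e,u,f)\sim(g,v,h)$ iff $e\mathscr R g$, $f\mathscr R h$, $u=ve$; composition $l(e,u,f)l(f,v,g)=l(e,vu,g)$. $\mathcal L_S$: objects $Se$, $e\in E$; morphisms $\rho(e,u,f)\colon Se\to Sf$, $t\mapsto tu$, $u\in eSf$. $\mathcal R_S$: objects $eS$; morphisms $\lambda(e,w,f)\colon eS\to fS$, $t\mapsto wt$, $w\in fSe$. Composition is left to right. $\Gamma_G\colon\mathcal R_G\to N^*\mathcal L_G$ is the cross-connection $\overrightarrow e\mapsto H(r^e;-)$, where $r^e(\overleftarrow g)=r(g,ge,e)$, and $\Gamma_S\colon\mathcal R_S\to N^*\mathcal L_S$ is Nambooripad's cross-connection $eS\mapsto H(\rho^e;-)$ of $S$, where $\rho^e(Sg)=\rho(g,ge,e)$. Their biordered sets are $E_{\Gamma_G}=\{(\overleftarrow e,\overrightarrow e):e\in E\}$ and $E_{\Gamma_S}=\{(Se,eS):e\in E\}$, with associated idempotent cones $\gamma(\overleftarrow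 e,\overrightarrow e)=r^e$ and $\gamma(Se,eS)=\rho^e$. Transposes: for $(\overleftarrow e,\overrightarrow e),(\overleftarrow f,\overrightarrow f)\in E_{\Gamma_G}$ the transpose of $r(e,u,f)$ is $l(f,u,e)\colon\overrightarrow f\to\overrightarrow e$, and for $(Se,eS),(Sf,fS)\in E_{\Gamma_S}$ the transpose of $\rho(e,u,f)$ is $\lambda(f,u,e)\colon fS\to eS$. A morphism of cross-connections $(\mathcal D,\mathcal C;\Gamma)\to(\mathcal D',\mathcal C';\Gamma')$ is a pair $(F,G)$ of inclusion-preserving functors $F\colon\mathcal C\to\mathcal C'$, $G\colon\mathcal D\to\mathcal D'$ with (M1) $(c,d)\in E_\Gamma\Rightarrow(F(c),G(d))\in E_{\Gamma'}$ and $F(\gamma(c,d)(c'))=\gamma(F(c),G(d))(F(c'))$ for all objects $c'$ of $\mathcal C$; (M2) if $(c,d),(c',d')\in E_\Gamma$ and $f^*\colon d'\to d$ is the transpose of $f\colon c\to c'$ then $G(f^* )=(F(f))^*$. An isomorphism of cross-connections is such a morphism whose components are isomorphisms of normal categories (inclusion-preserving isomorphisms of categories with inclusion-preserving inverses). *)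

theory Defs
  imports Main "HOL-Library.FuncSet"
begin

text \<open>The regular semigroup S is the whole carrier of a type of class semigroup_mult.
  Composition of morphisms is written left to right: Comp m n means first m, then n.\<close>

definition idems :: "'a::semigroup_mult set" where
  "idems = {e. e * e = e}"

definition lideal :: "'a::semigroup_mult \<Rightarrow> 'a set" where
  "lideal e = {s * e | s. True}"

definition rideal :: "'a::semigroup_mult \<Rightarrow> 'a set" where
  "rideal e = {e * s | s. True}"

definition sandw :: "'a::semigroup_mult \<Rightarrow> 'a \<Rightarrow> 'a set" where
  "sandw e f = {e * s * f | s. True}"

text \<open>Green's relations L and R (via S^1 a = S^1 b, resp. a S^1 = b S^1).\<close>

definition greenL :: "'a::semigroup_mult \<Rightarrow> 'a \<Rightarrow> bool" where
  "greenL a b \<longleftrightarrow> (a = b \<or> (\<exists>x. a = x * b)) \<and> (b = a \<or> (\<exists>y. b = y * a))"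

definition greenR :: "'a::semigroup_mult \<Rightarrow> 'a \<Rightarrow> bool" where
  "greenR a b \<longleftrightarrow> (a = b \<or> (\<exists>x. a = b * x)) \<and> (b = a \<or> (\<exists>y. b = a * y))"

definition Lcl :: "'a::semigroup_mult \<Rightarrow> 'a set" where
  "Lcl e = {g \<in> idems. greenL g e}"

definition Rcl :: "'a::semigroup_mult \<Rightarrow> 'a set" where
  "Rcl e = {g \<in> idems. greenR g e}"

record ('o, 'm) ncat =
  Ob :: "'o set"
  Ar :: "'m set"
  cDom :: "'m \<Rightarrow> 'o"
  cCod :: "'m \<Rightarrow> 'o"
  Idm :: "'o \<Rightarrow> 'm"
  Comp :: "'m \<Rightarrow> 'm \<Rightarrow> 'm"
  Incl :: "'m set"

definition iso_ncat :: "('o, 'm) ncat \<Rightarrow> ('p, 'n) ncat \<Rightarrow> ('o \<Rightarrow> 'p) \<Rightarrow> ('m \<Rightarrow> 'n) \<Rightarrow> bool" where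
  "iso_ncat C D Fo Fa \<longleftrightarrow>
     bij_betw Fo (Ob C) (Ob D) \<and> bij_betw Fa (Ar C) (Ar D) \<and>
     (\<forall>m\<in>Ar C. cDom D (Fa m) = Fo (cDom C m) \<and> cCod D (Fa m) = Fo (cCod C m)) \<and>
     (\<forall>c\<in>Ob C. Fa (Idm C c) = Idm D (Fo c)) \<and>
     (\<forall>m\<in>Ar C. \<forall>n\<in>Ar C. cCod C m = cDom C n \<longrightarrow> Fa (Comp C m n) = Comp D (Fa m) (Fa n)) \<and>
     (\<forall>m\<in>Incl C. Fa m \<in> Incl D) \<and>
     (\<forall>m\<in>Ar C. Fa m \<in> Incl D \<longrightarrow> m \<in> Incl C)"

definition LGtrip :: "('a::semigroup_mult \<times> 'a \<times> 'a) set" where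
  "LGtrip = {(e, u, f). e \<in> idems \<and> f \<in> idems \<and> u \<in> sandw e f}"

definition rG :: "'a::semigroup_mult \<Rightarrow> 'a \<Rightarrow> 'a \<Rightarrow> ('a \<times> 'a \<times> 'a) set" where
  "rG e u f = {(g, v, h) \<in> LGtrip. greenL e g \<and> greenL f h \<and> u = e * v}"

definition RGtrip :: "('a::semigroup_mult \<times> 'a \<times> 'a) set" where
  "RGtrip = {(e, u, f). e \<in> idems \<and> f \<in> idems \<and> u \<in> sandw f e}"

definition lG :: "'a::semigroup_mult \<Rightarrow> 'a \<Rightarrow> 'a \<Rightarrow> ('a \<times> 'a \<times> 'a) set" where
  "lG e u f = {(g, v, h) \<in> RGtrip. greenR e g \<and> greenR f h \<and> u = v * e}"

definition LG_cat :: "('a::semigroup_mult set, ('a \<times> 'a \<times> 'a) set) ncat" where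
  "LG_cat = \<lparr> Ob = Lcl ` idems,
     Ar = {rG e u f | e u f. (e, u, f) \<in> LGtrip},
     cDom = (\<lambda>m. THE c. \<exists>e u f. (e, u, f) \<in> LGtrip \<and> m = rG e u f \<and> c = Lcl e),
     cCod = (\<lambda>m. THE c. \<exists>e u f. (e, u, f) \<in> LGtrip \<and> m = rG e u f \<and> c = Lcl f),
     Idm = (\<lambda>c. THE m. \<exists>e\<in>idems. c = Lcl e \<and> m = rG e e e),
     Comp = (\<lambda>m n. THE k. \<exists>e u f v g. (e, u, f) \<in> LGtrip \<and> (f, v, g) \<in> LGtrip \<and>
               m = rG e u f \<and> n = rG f v g \<and> k = rG e (u * v) g),
     Incl = {rG e e f | e f. e \<in> idems \<and> f \<in> idems \<and> e * f = e} \<rparr>"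

definition RG_cat :: "('a::semigroup_mult set, ('a \<times> 'a \<times> 'a) set) ncat" where
  "RG_cat = \<lparr> Ob = Rcl ` idems,
     Ar = {lG e u f | e u f. (e, u, f) \<in> RGtrip},
     cDom = (\<lambda>m. THE c. \<exists>e u f. (e, u, f) \<in> RGtrip \<and> m = lG e u f \<and> c = Rcl e),
     cCod = (\<lambda>m. THE c. \<exists>e u f. (e, u, f) \<in> RGtrip \<and> m = lG e u f \<and> c = Rcl f),
     Idm = (\<lambda>c. THE m. \<exists>e\<in>idems. c = Rcl e \<and> m = lG e e e),
     Comp = (\<lambda>m n. THE k. \<exists>e u f v g. (e, u, f) \<in> RGtrip \<and> (f, v, g) \<in> RGtrip \<and>
               m = lG e u f \<and> n = lG f v g \<and> k = lG e (v * u) g),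
     Incl = {lG e e f | e f. e \<in> idems \<and> f \<in> idems \<and> f * e = e} \<rparr>"

text \<open>A morphism is represented as (domain, codomain, map restricted to the domain).\<close>

definition rhoS :: "'a::semigroup_mult \<Rightarrow> 'a \<Rightarrow> 'a \<Rightarrow> 'a set \<times> 'a set \<times> ('a \<Rightarrow> 'a)" where
  "rhoS e u f = (lideal e, lideal f, restrict (\<lambda>t. t * u) (lideal e))"

definition lamS :: "'a::semigroup_mult \<Rightarrow> 'a \<Rightarrow> 'a \<Rightarrow> 'a set \<times> 'a set \<times> ('a \<Rightarrow> 'a)" where
  "lamS e w f = (rideal e, rideal f, restrict (\<lambda>t. w * t) (rideal e))"

definition mcomp :: "'a set \<times> 'a set \<times> ('a \<Rightarrow> 'a) \<Rightarrow> 'a set \<times> 'a set \<times> ('a \<Rightarrow> 'a)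
                      \<Rightarrow> 'a set \<times> 'a set \<times> ('a \<Rightarrow> 'a)" where
  "mcomp m n = (fst m, fst (snd n), restrict (\<lambda>t. snd (snd n) (snd (snd m) t)) (fst m))"

definition LS_cat :: "('a::semigroup_mult set, 'a set \<times> 'a set \<times> ('a \<Rightarrow> 'a)) ncat" where
  "LS_cat = \<lparr> Ob = lideal ` idems,
     Ar = {rhoS e u f | e u f. (e, u, f) \<in> LGtrip},
     cDom = fst, cCod = (\<lambda>m. fst (snd m)),
     Idm = (\<lambda>A. (A, A, restrict id A)),
     Comp = mcomp,
     Incl = {(lideal e, lideal f, restrict id (lideal e)) | e f.
               e \<in> idems \<and> f \<in> idems \<and> lideal e \<subseteq> lideal f} \<rparr>"

definition RS_cat :: "('a::semigroup_mult set, 'a set \<times> 'a set \<times> ('a \<Rightarrow> 'a)) ncat" where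
  "RS_cat = \<lparr> Ob = rideal ` idems,
     Ar = {lamS e w f | e w f. (e, w, f) \<in> RGtrip},
     cDom = fst, cCod = (\<lambda>m. fst (snd m)),
     Idm = (\<lambda>A. (A, A, restrict id A)),
     Comp = mcomp,
     Incl = {(rideal e, rideal f, restrict id (rideal e)) | e f.
               e \<in> idems \<and> f \<in> idems \<and> rideal e \<subseteq> rideal f} \<rparr>"

definition Lob :: "'a::semigroup_mult set \<Rightarrow> 'a set" where
  "Lob c = (THE A. \<exists>e\<in>idems. c = Lcl e \<and> A = lideal e)"

definition Lar :: "('a::semigroup_mult \<times> 'a \<times> 'a) set \<Rightarrow> 'a set \<times> 'a set \<times> ('a \<Rightarrow> 'a)" where
  "Lar m = (THE k. \<exists>e u f. (e, u, f) \<in> LGtrip \<and> m = rG e u f \<and> k = rhoS e u f)"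

definition Rob :: "'a::semigroup_mult set \<Rightarrow> 'a set" where
  "Rob c = (THE A. \<exists>e\<in>idems. c = Rcl e \<and> A = rideal e)"

definition Rar :: "('a::semigroup_mult \<times> 'a \<times> 'a) set \<Rightarrow> 'a set \<times> 'a set \<times> ('a \<Rightarrow> 'a)" where
  "Rar m = (THE k. \<exists>e u f. (e, u, f) \<in> RGtrip \<and> m = lG e u f \<and> k = lamS e u f)"

definition EGS :: "('a::semigroup_mult set \<times> 'a set) set" where
  "EGS = {(lideal e, rideal e) | e. e \<in> idems}"

definition rcone :: "'a::semigroup_mult \<Rightarrow> 'a set \<Rightarrow> ('a \<times> 'a \<times> 'a) set" where
  "rcone e c = (THE m. \<exists>g\<in>idems. c = Lcl g \<and> m = rG g (g * e) e)"

definition rhocone :: "'a::semigroup_mult \<Rightarrow> 'a set \<Rightarrow> 'a set \<times> 'a set \<times> ('a \<Rightarrow> 'a)" where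
  "rhocone e A = (THE m. \<exists>g\<in>idems. A = lideal g \<and> m = rhoS g (g * e) e)"

definition transG :: "'a::semigroup_mult \<Rightarrow> 'a \<Rightarrow> ('a \<times> 'a \<times> 'a) set \<Rightarrow> ('a \<times> 'a \<times> 'a) set" where
  "transG e f m = (THE k. \<exists>u\<in>sandw e f. m = rG e u f \<and> k = lG f u e)"

definition transS :: "'a::semigroup_mult \<Rightarrow> 'a \<Rightarrow> 'a set \<times> 'a set \<times> ('a \<Rightarrow> 'a)
                       \<Rightarrow> 'a set \<times> 'a set \<times> ('a \<Rightarrow> 'a)" where
  "transS e f m = (THE k. \<exists>u\<in>sandw e f. m = rhoS e u f \<and> k = lamS f u e)"

end

theory Submission
  imports Defs
begin

lemma idemsD: "e \<in> idems \<Longrightarrow> e*e = e" by (simp add: idems_def)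

lemma absR: "(g::'a::semigroup_mult)*g = g \<Longrightarrow> (e = g \<or> (\<exists>x. e = x*g)) \<longleftrightarrow> e*g = e"
proof
  assume g: "g*g = g" and "e = g \<or> (\<exists>x. e = x*g)"
  then show "e*g = e"
  proof (elim disjE exE)
    fix x assume "e = x*g" then show "e*g = e" using g by (simp add: mult.assoc)
  qed (use g in simp)
qed (metis)

lemma absL: "(g::'a::semigroup_mult)*g = g \<Longrightarrow> (e = g \<or> (\<exists>x. e = g*x)) \<longleftrightarrow> g*e = e"
proof
  assume g: "g*g = g" and "e = g \<or> (\<exists>x. e = g*x)"
  then show "g*e = e"
  proof (elim disjE exE)
    fix x assume "e = g*x" then show "g*e = e" using g by (simp add: mult.assoc[symmetric])
  qed (use g in simp)
qed (metis)

lemma gL_idem: assumes "e\<in>idems" "g\<in>idems" shows "greenL e g \<longleftrightarrow> e*g = e \<and> g*e = g"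
proof -
  have "(g = e \<or> (\<exists>y. g = y * e)) \<longleftrightarrow> g*e = g" using assms absR idemsD by blast
  moreover have "(e = g \<or> (\<exists>y. e = y * g)) \<longleftrightarrow> e*g = e" using assms absR idemsD by blast
  ultimately show ?thesis unfolding greenL_def by (metis (no_types))
qed

lemma gR_idem: assumes "e\<in>idems" "g\<in>idems" shows "greenR e g \<longleftrightarrow> g*e = e \<and> e*g = g"
proof -
  have "(g = e \<or> (\<exists>y. g = e * y)) \<longleftrightarrow> e*g = g" using assms absL idemsD by blast
  moreover have "(e = g \<or> (\<exists>y. e = g * y)) \<longleftrightarrow> g*e = e" using assms absL idemsD by blast
  ultimately show ?thesis unfolding greenR_def by (metis (no_types))
qed


lemma tr: "(a::'a::semigroup_mult)*b = a \<Longrightarrow> b*c = b \<Longrightarrow> a*c = a"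
  by (metis mult.assoc)
lemma tr': "(b::'a::semigroup_mult)*a = a \<Longrightarrow> c*b = b \<Longrightarrow> c*a = a"
  by (metis mult.assoc)

lemma Lcl_eq: assumes "e\<in>idems" "g\<in>idems" shows "Lcl e = Lcl g \<longleftrightarrow> e*g = e \<and> g*e = g"
proof
  assume "Lcl e = Lcl g"
  moreover have "e \<in> Lcl e" using assms by (simp add: Lcl_def greenL_def)
  ultimately show "e*g = e \<and> g*e = g" using assms by (auto simp: Lcl_def gL_idem)
next
  assume h: "e*g = e \<and> g*e = g"
  have "\<And>x::'a. (x*e = x \<and> e*x = e) \<longleftrightarrow> (x*g = x \<and> g*x = g)"
    using h tr by blast
  then show "Lcl e = Lcl g" unfolding Lcl_def using assms
    by (auto simp: gL_idem)
qed

lemma Rcl_eq: assumes "e\<in>idems" "g\<in>idems" shows "Rcl e = Rcl g \<longleftrightarrow> g*e = e \<and> e*g = g"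
proof
  assume "Rcl e = Rcl g"
  moreover have "e \<in> Rcl e" using assms by (simp add: Rcl_def greenR_def)
  ultimately show "g*e = e \<and> e*g = g" using assms by (auto simp: Rcl_def gR_idem)
next
  assume h: "g*e = e \<and> e*g = g"
  have "\<And>x::'a. (e*x = x \<and> x*e = e) \<longleftrightarrow> (g*x = x \<and> x*g = g)"
    using h tr' by blast
  then show "Rcl e = Rcl g" unfolding Rcl_def using assms
    by (auto simp: gR_idem)
qed

lemma lideal_mem: assumes "e\<in>idems" shows "x \<in> lideal e \<longleftrightarrow> x*e = x"
proof
  assume "x \<in> lideal e" then obtain s where "x = s*e" by (auto simp: lideal_def)
  then show "x*e = x" using idemsD[OF assms] by (simp add: mult.assoc)
next
  assume "x*e = x" then have "x = x*e" by simp then show "x \<in> lideal e" unfolding lideal_def by blast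
qed

lemma rideal_mem: assumes "e\<in>idems" shows "x \<in> rideal e \<longleftrightarrow> e*x = x"
proof
  assume "x \<in> rideal e" then obtain s where "x = e*s" by (auto simp: rideal_def)
  then show "e*x = x" using idemsD[OF assms] by (simp add: mult.assoc[symmetric])
next
  assume "e*x = x" then have "x = e*x" by simp then show "x \<in> rideal e" unfolding rideal_def by blast
qed

lemma lideal_sub: assumes "e\<in>idems" "f\<in>idems" shows "lideal e \<subseteq> lideal f \<longleftrightarrow> e*f = e"
proof
  assume "lideal e \<subseteq> lideal f"
  moreover have "e \<in> lideal e" using assms idemsD lideal_mem by blast
  ultimately show "e*f = e" using assms lideal_mem by blast
next
  assume "e*f = e" then show "lideal e \<subseteq> lideal f" using assms lideal_mem tr by blast
qed

lemma rideal_sub: assumes "e\<in>idems" "f\<in>idems" shows "rideal e \<subseteq> rideal f \<longleftrightarrow> f*e = e"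
proof
  assume "rideal e \<subseteq> rideal f"
  moreover have "e \<in> rideal e" using assms idemsD rideal_mem by blast
  ultimately show "f*e = e" using assms rideal_mem by blast
next
  assume "f*e = e" then show "rideal e \<subseteq> rideal f" using assms rideal_mem tr' by blast
qed

lemma lideal_eq: assumes "e\<in>idems" "g\<in>idems" shows "lideal e = lideal g \<longleftrightarrow> e*g = e \<and> g*e = g"
  using lideal_sub[OF assms] lideal_sub[OF assms(2,1)] by blast

lemma rideal_eq: assumes "e\<in>idems" "g\<in>idems" shows "rideal e = rideal g \<longleftrightarrow> g*e = e \<and> e*g = g"
  using rideal_sub[OF assms] rideal_sub[OF assms(2,1)] by blast

lemma sandw_mem: assumes "e\<in>idems" "f\<in>idems" shows "u \<in> sandw e f \<longleftrightarrow> e*u = u \<and> u*f = u"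
proof
  assume "u \<in> sandw e f" then obtain s where s: "u = e*s*f" by (auto simp: sandw_def)
  have "e*u = u" using s idemsD[OF assms(1)] by (simp add: mult.assoc[symmetric])
  moreover have "u*f = u" using s idemsD[OF assms(2)] by (simp add: mult.assoc)
  ultimately show "e*u = u \<and> u*f = u" by simp
next
  assume h: "e*u = u \<and> u*f = u"
  then have "u = e*u*f" by simp
  then show "u \<in> sandw e f" unfolding sandw_def by blast
qed

lemma LGtrip_mem: "(e,u,f) \<in> LGtrip \<longleftrightarrow> e\<in>idems \<and> f\<in>idems \<and> e*u = u \<and> u*f = u"
  unfolding LGtrip_def using sandw_mem by blast

lemma RGtrip_mem: "(e,u,f) \<in> RGtrip \<longleftrightarrow> e\<in>idems \<and> f\<in>idems \<and> f*u = u \<and> u*e = u"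
  unfolding RGtrip_def using sandw_mem by blast


lemma rG_mem: assumes "(e,u,f) \<in> LGtrip"
  shows "(x,y,z) \<in> rG e u f \<longleftrightarrow> (x,y,z) \<in> LGtrip \<and> e*x=e \<and> x*e=x \<and> f*z=f \<and> z*f=z \<and> u=e*y"
  using assms by (auto simp: rG_def LGtrip_mem gL_idem)

lemma lG_mem: assumes "(e,u,f) \<in> RGtrip"
  shows "(x,y,z) \<in> lG e u f \<longleftrightarrow> (x,y,z) \<in> RGtrip \<and> x*e=e \<and> e*x=x \<and> z*f=f \<and> f*z=z \<and> u=y*e"
  using assms by (auto simp: lG_def RGtrip_mem gR_idem)

lemma rG_eq: assumes a: "(e,u,f) \<in> LGtrip" and b: "(g,v,h) \<in> LGtrip"
  shows "rG e u f = rG g v h \<longleftrightarrow> (e*g=e \<and> g*e=g \<and> f*h=f \<and> h*f=h \<and> u=e*v)"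
proof
  assume "rG e u f = rG g v h"
  moreover have "(g,v,h) \<in> rG g v h" using b by (simp add: rG_mem LGtrip_mem idemsD)
  ultimately have "(g,v,h) \<in> rG e u f" by simp
  then show "e*g=e \<and> g*e=g \<and> f*h=f \<and> h*f=h \<and> u=e*v"
    using rG_mem[OF a] by blast
next
  assume c: "e*g=e \<and> g*e=g \<and> f*h=f \<and> h*f=h \<and> u=e*v"
  have gv: "g*v = v" using b by (simp add: LGtrip_mem)
  have gu: "g*u = v" using c gv by (metis mult.assoc)
  have u1: "\<And>y. u = e*y \<longleftrightarrow> v = g*y"
  proof
    fix y assume "u = e*y" then show "v = g*y" using gu c by (metis mult.assoc)
  next
    fix y assume "v = g*y" then show "u = e*y" using c by (metis mult.assoc)
  qed
  have "\<And>x. e*x = e \<longleftrightarrow> g*x = g" using c tr by blast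
  moreover have "\<And>x. x*e = x \<longleftrightarrow> x*g = x" using c tr by blast
  moreover have "\<And>z. f*z = f \<longleftrightarrow> h*z = h" using c tr by blast
  moreover have "\<And>z. z*f = z \<longleftrightarrow> z*h = z" using c tr by blast
  note hs = calculation this u1
  show "rG e u f = rG g v h"
  proof (rule set_eqI)
    fix t :: "'a\<times>'a\<times>'a" obtain x y z where t: "t = (x,y,z)" by (cases t) auto
    show "t \<in> rG e u f \<longleftrightarrow> t \<in> rG g v h"
      unfolding t rG_mem[OF a] rG_mem[OF b] using hs by blast
  qed
qed

lemma lG_eq: assumes a: "(e,u,f) \<in> RGtrip" and b: "(g,v,h) \<in> RGtrip"
  shows "lG e u f = lG g v h \<longleftrightarrow> (g*e=e \<and> e*g=g \<and> h*f=f \<and> f*h=h \<and> u=v*e)"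
proof
  assume "lG e u f = lG g v h"
  moreover have "(g,v,h) \<in> lG g v h" using b by (simp add: lG_mem RGtrip_mem idemsD)
  ultimately have "(g,v,h) \<in> lG e u f" by simp
  then show "g*e=e \<and> e*g=g \<and> h*f=f \<and> f*h=h \<and> u=v*e"
    using lG_mem[OF a] by blast
next
  assume c: "g*e=e \<and> e*g=g \<and> h*f=f \<and> f*h=h \<and> u=v*e"
  have gv: "v*g = v" using b by (simp add: RGtrip_mem)
  have gu: "u*g = v" using c gv by (metis mult.assoc)
  have u1: "\<And>y. u = y*e \<longleftrightarrow> v = y*g"
  proof
    fix y assume "u = y*e" then show "v = y*g" using gu c by (metis mult.assoc)
  next
    fix y assume "v = y*g" then show "u = y*e" using c by (metis mult.assoc)
  qed
  have "\<And>x. x*e = e \<longleftrightarrow> x*g = g" using c tr' by blast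
  moreover have "\<And>x. e*x = x \<longleftrightarrow> g*x = x" using c tr' by blast
  moreover have "\<And>z. z*f = f \<longleftrightarrow> z*h = h" using c tr' by blast
  moreover have "\<And>z. f*z = z \<longleftrightarrow> h*z = z" using c tr' by blast
  note hs = calculation this u1
  show "lG e u f = lG g v h"
  proof (rule set_eqI)
    fix t :: "'a\<times>'a\<times>'a" obtain x y z where t: "t = (x,y,z)" by (cases t) auto
    show "t \<in> lG e u f \<longleftrightarrow> t \<in> lG g v h"
      unfolding t lG_mem[OF a] lG_mem[OF b] using hs by blast
  qed
qed

lemma rhoS_eq: assumes a: "(e,u,f) \<in> LGtrip" and b: "(g,v,h) \<in> LGtrip"
  shows "rhoS e u f = rhoS g v h \<longleftrightarrow> (e*g=e \<and> g*e=g \<and> f*h=f \<and> h*f=h \<and> u=e*v)"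
proof
  assume r: "rhoS e u f = rhoS g v h"
  have ie: "e\<in>idems" "f\<in>idems" "g\<in>idems" "h\<in>idems" "e*u = u"
    using a b by (auto simp: LGtrip_mem)
  from r have l1: "lideal e = lideal g" and l2: "lideal f = lideal h"
    and l3: "restrict (\<lambda>t. t*u) (lideal e) = restrict (\<lambda>t. t*v) (lideal g)"
    by (auto simp: rhoS_def)
  have em: "e \<in> lideal e" using ie idemsD lideal_mem by blast
  have "restrict (\<lambda>t. t*u) (lideal e) e = restrict (\<lambda>t. t*v) (lideal g) e" using l3 by simp
  then have "e*u = e*v" using em l1 by simp
  then show "e*g=e \<and> g*e=g \<and> f*h=f \<and> h*f=h \<and> u=e*v"
    using l1 l2 ie lideal_eq by auto
next
  assume c: "e*g=e \<and> g*e=g \<and> f*h=f \<and> h*f=h \<and> u=e*v"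
  have ie: "e\<in>idems" "f\<in>idems" "g\<in>idems" "h\<in>idems"
    using a b by (auto simp: LGtrip_mem)
  have l1: "lideal e = lideal g" "lideal f = lideal h" using c ie lideal_eq by auto
  have "restrict (\<lambda>t. t*u) (lideal e) = restrict (\<lambda>t. t*v) (lideal e)"
  proof (rule restrict_ext)
    fix t assume "t \<in> lideal e" then have "t*e = t" using ie lideal_mem by blast
    then show "t*u = t*v" using c by (metis mult.assoc)
  qed
  then show "rhoS e u f = rhoS g v h" using l1 by (simp add: rhoS_def)
qed

lemma lamS_eq: assumes a: "(e,u,f) \<in> RGtrip" and b: "(g,v,h) \<in> RGtrip"
  shows "lamS e u f = lamS g v h \<longleftrightarrow> (g*e=e \<and> e*g=g \<and> h*f=f \<and> f*h=h \<and> u=v*e)"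
proof
  assume r: "lamS e u f = lamS g v h"
  have ie: "e\<in>idems" "f\<in>idems" "g\<in>idems" "h\<in>idems" "u*e = u"
    using a b by (auto simp: RGtrip_mem)
  from r have l1: "rideal e = rideal g" and l2: "rideal f = rideal h"
    and l3: "restrict (\<lambda>t. u*t) (rideal e) = restrict (\<lambda>t. v*t) (rideal g)"
    by (auto simp: lamS_def)
  have em: "e \<in> rideal e" using ie idemsD rideal_mem by blast
  have "restrict (\<lambda>t. u*t) (rideal e) e = restrict (\<lambda>t. v*t) (rideal g) e" using l3 by simp
  then have "u*e = v*e" using em l1 by simp
  then show "g*e=e \<and> e*g=g \<and> h*f=f \<and> f*h=h \<and> u=v*e"
    using l1 l2 ie rideal_eq by auto
next
  assume c: "g*e=e \<and> e*g=g \<and> h*f=f \<and> f*h=h \<and> u=v*e"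
  have ie: "e\<in>idems" "f\<in>idems" "g\<in>idems" "h\<in>idems"
    using a b by (auto simp: RGtrip_mem)
  have l1: "rideal e = rideal g" "rideal f = rideal h" using c ie rideal_eq by auto
  have "restrict (\<lambda>t. u*t) (rideal e) = restrict (\<lambda>t. v*t) (rideal e)"
  proof (rule restrict_ext)
    fix t assume "t \<in> rideal e" then have "e*t = t" using ie rideal_mem by blast
    then show "u*t = v*t" using c by (metis mult.assoc)
  qed
  then show "lamS e u f = lamS g v h" using l1 by (simp add: lamS_def)
qed


lemma Lar_eq: assumes a: "(e,u,f) \<in> LGtrip" shows "Lar (rG e u f) = rhoS e u f"
  unfolding Lar_def
proof (rule the_equality)
  show "\<exists>e' u' f'. (e',u',f') \<in> LGtrip \<and> rG e u f = rG e' u' f' \<and> rhoS e u f = rhoS e' u' f'"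
    using a by blast
next
  fix k assume "\<exists>e' u' f'. (e',u',f') \<in> LGtrip \<and> rG e u f = rG e' u' f' \<and> k = rhoS e' u' f'"
  then obtain e' u' f' where b: "(e',u',f') \<in> LGtrip" "rG e u f = rG e' u' f'" "k = rhoS e' u' f'"
    by blast
  then show "k = rhoS e u f" using rG_eq[OF a b(1)] rhoS_eq[OF a b(1)] by simp
qed

lemma Rar_eq: assumes a: "(e,u,f) \<in> RGtrip" shows "Rar (lG e u f) = lamS e u f"
  unfolding Rar_def
proof (rule the_equality)
  show "\<exists>e' u' f'. (e',u',f') \<in> RGtrip \<and> lG e u f = lG e' u' f' \<and> lamS e u f = lamS e' u' f'"
    using a by blast
next
  fix k assume "\<exists>e' u' f'. (e',u',f') \<in> RGtrip \<and> lG e u f = lG e' u' f' \<and> k = lamS e' u' f'"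
  then obtain e' u' f' where b: "(e',u',f') \<in> RGtrip" "lG e u f = lG e' u' f'" "k = lamS e' u' f'"
    by blast
  then show "k = lamS e u f" using lG_eq[OF a b(1)] lamS_eq[OF a b(1)] by simp
qed

lemma Lob_eq: assumes a: "e \<in> idems" shows "Lob (Lcl e) = lideal e"
  unfolding Lob_def
proof (rule the_equality)
  show "\<exists>e'\<in>idems. Lcl e = Lcl e' \<and> lideal e = lideal e'" using a by blast
next
  fix A assume "\<exists>e'\<in>idems. Lcl e = Lcl e' \<and> A = lideal e'"
  then obtain e' where b: "e'\<in>idems" "Lcl e = Lcl e'" "A = lideal e'" by blast
  then show "A = lideal e" using Lcl_eq[OF a b(1)] lideal_eq[OF a b(1)] by simp
qed

lemma Rob_eq: assumes a: "e \<in> idems" shows "Rob (Rcl e) = rideal e"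
  unfolding Rob_def
proof (rule the_equality)
  show "\<exists>e'\<in>idems. Rcl e = Rcl e' \<and> rideal e = rideal e'" using a by blast
next
  fix A assume "\<exists>e'\<in>idems. Rcl e = Rcl e' \<and> A = rideal e'"
  then obtain e' where b: "e'\<in>idems" "Rcl e = Rcl e'" "A = rideal e'" by blast
  then show "A = rideal e" using Rcl_eq[OF a b(1)] rideal_eq[OF a b(1)] by simp
qed

lemma LG_simps:
  "Ob LG_cat = Lcl ` idems"
  "Ar LG_cat = {rG e u f | e u f. (e, u, f) \<in> LGtrip}"
  "Incl LG_cat = {rG e e f | e f. e \<in> idems \<and> f \<in> idems \<and> e * f = e}"
  by (simp_all add: LG_cat_def)

lemma RG_simps:
  "Ob RG_cat = Rcl ` idems"
  "Ar RG_cat = {lG e u f | e u f. (e, u, f) \<in> RGtrip}"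
  "Incl RG_cat = {lG e e f | e f. e \<in> idems \<and> f \<in> idems \<and> f * e = e}"
  by (simp_all add: RG_cat_def)

lemma LS_simps:
  "Ob LS_cat = lideal ` idems"
  "Ar LS_cat = {rhoS e u f | e u f. (e, u, f) \<in> LGtrip}"
  "cDom LS_cat = fst" "cCod LS_cat = (\<lambda>m. fst (snd m))"
  "Idm LS_cat = (\<lambda>A. (A, A, restrict id A))" "Comp LS_cat = mcomp"
  "Incl LS_cat = {(lideal e, lideal f, restrict id (lideal e)) | e f.
               e \<in> idems \<and> f \<in> idems \<and> lideal e \<subseteq> lideal f}"
  by (simp_all add: LS_cat_def)

lemma RS_simps:
  "Ob RS_cat = rideal ` idems"
  "Ar RS_cat = {lamS e w f | e w f. (e, w, f) \<in> RGtrip}"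
  "cDom RS_cat = fst" "cCod RS_cat = (\<lambda>m. fst (snd m))"
  "Idm RS_cat = (\<lambda>A. (A, A, restrict id A))" "Comp RS_cat = mcomp"
  "Incl RS_cat = {(rideal e, rideal f, restrict id (rideal e)) | e f.
               e \<in> idems \<and> f \<in> idems \<and> rideal e \<subseteq> rideal f}"
  by (simp_all add: RS_cat_def)

lemma LG_Dom: assumes a: "(e,u,f) \<in> LGtrip" shows "cDom LG_cat (rG e u f) = Lcl e"
proof -
  have "cDom LG_cat (rG e u f) = (THE c. \<exists>e' u' f'. (e', u', f') \<in> LGtrip \<and> rG e u f = rG e' u' f' \<and> c = Lcl e')"
    by (simp add: LG_cat_def)
  also have "\<dots> = Lcl e"
  proof (rule the_equality)
    show "\<exists>e' u' f'. (e', u', f') \<in> LGtrip \<and> rG e u f = rG e' u' f' \<and> Lcl e = Lcl e'" using a by blast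
  next
    fix c assume "\<exists>e' u' f'. (e', u', f') \<in> LGtrip \<and> rG e u f = rG e' u' f' \<and> c = Lcl e'"
    then obtain e' u' f' where b: "(e', u', f') \<in> LGtrip" "rG e u f = rG e' u' f'" "c = Lcl e'" by blast
    then show "c = Lcl e" using rG_eq[OF a b(1)] Lcl_eq a unfolding LGtrip_mem by metis
  qed
  finally show ?thesis .
qed

lemma LG_Cod: assumes a: "(e,u,f) \<in> LGtrip" shows "cCod LG_cat (rG e u f) = Lcl f"
proof -
  have "cCod LG_cat (rG e u f) = (THE c. \<exists>e' u' f'. (e', u', f') \<in> LGtrip \<and> rG e u f = rG e' u' f' \<and> c = Lcl f')"
    by (simp add: LG_cat_def)
  also have "\<dots> = Lcl f"
  proof (rule the_equality)
    show "\<exists>e' u' f'. (e', u', f') \<in> LGtrip \<and> rG e u f = rG e' u' f' \<and> Lcl f = Lcl f'" using a by blast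
  next
    fix c assume "\<exists>e' u' f'. (e', u', f') \<in> LGtrip \<and> rG e u f = rG e' u' f' \<and> c = Lcl f'"
    then obtain e' u' f' where b: "(e', u', f') \<in> LGtrip" "rG e u f = rG e' u' f'" "c = Lcl f'" by blast
    then show "c = Lcl f" using rG_eq[OF a b(1)] Lcl_eq a unfolding LGtrip_mem by metis
  qed
  finally show ?thesis .
qed

lemma RG_Dom: assumes a: "(e,u,f) \<in> RGtrip" shows "cDom RG_cat (lG e u f) = Rcl e"
proof -
  have "cDom RG_cat (lG e u f) = (THE c. \<exists>e' u' f'. (e', u', f') \<in> RGtrip \<and> lG e u f = lG e' u' f' \<and> c = Rcl e')"
    by (simp add: RG_cat_def)
  also have "\<dots> = Rcl e"
  proof (rule the_equality)
    show "\<exists>e' u' f'. (e', u', f') \<in> RGtrip \<and> lG e u f = lG e' u' f' \<and> Rcl e = Rcl e'" using a by blast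
  next
    fix c assume "\<exists>e' u' f'. (e', u', f') \<in> RGtrip \<and> lG e u f = lG e' u' f' \<and> c = Rcl e'"
    then obtain e' u' f' where b: "(e', u', f') \<in> RGtrip" "lG e u f = lG e' u' f'" "c = Rcl e'" by blast
    then show "c = Rcl e" using lG_eq[OF a b(1)] Rcl_eq a unfolding RGtrip_mem by metis
  qed
  finally show ?thesis .
qed

lemma RG_Cod: assumes a: "(e,u,f) \<in> RGtrip" shows "cCod RG_cat (lG e u f) = Rcl f"
proof -
  have "cCod RG_cat (lG e u f) = (THE c. \<exists>e' u' f'. (e', u', f') \<in> RGtrip \<and> lG e u f = lG e' u' f' \<and> c = Rcl f')"
    by (simp add: RG_cat_def)
  also have "\<dots> = Rcl f"
  proof (rule the_equality)
    show "\<exists>e' u' f'. (e', u', f') \<in> RGtrip \<and> lG e u f = lG e' u' f' \<and> Rcl f = Rcl f'" using a by blast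
  next
    fix c assume "\<exists>e' u' f'. (e', u', f') \<in> RGtrip \<and> lG e u f = lG e' u' f' \<and> c = Rcl f'"
    then obtain e' u' f' where b: "(e', u', f') \<in> RGtrip" "lG e u f = lG e' u' f'" "c = Rcl f'" by blast
    then show "c = Rcl f" using lG_eq[OF a b(1)] Rcl_eq a unfolding RGtrip_mem by metis
  qed
  finally show ?thesis .
qed

lemma LG_Idm: assumes a: "e \<in> idems" shows "Idm LG_cat (Lcl e) = rG e e e"
proof -
  have "Idm LG_cat (Lcl e) = (THE m. \<exists>e'\<in>idems. Lcl e = Lcl e' \<and> m = rG e' e' e')"
    by (simp add: LG_cat_def)
  also have "\<dots> = rG e e e"
  proof (rule the_equality)
    show "\<exists>e'\<in>idems. Lcl e = Lcl e' \<and> rG e e e = rG e' e' e'" using a by blast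
  next
    fix m assume "\<exists>e'\<in>idems. Lcl e = Lcl e' \<and> m = rG e' e' e'"
    then obtain e' where b: "e'\<in>idems" "Lcl e = Lcl e'" "m = rG e' e' e'" by blast
    have t: "(e,e,e) \<in> LGtrip" "(e',e',e') \<in> LGtrip" using a b(1) by (auto simp: LGtrip_mem idemsD)
    have "e*e' = e" "e'*e = e'" using Lcl_eq[OF a b(1)] b(2) by auto
    then show "m = rG e e e" using b(3) rG_eq[OF t(2,1)] by simp
  qed
  finally show ?thesis .
qed

lemma RG_Idm: assumes a: "e \<in> idems" shows "Idm RG_cat (Rcl e) = lG e e e"
proof -
  have "Idm RG_cat (Rcl e) = (THE m. \<exists>e'\<in>idems. Rcl e = Rcl e' \<and> m = lG e' e' e')"
    by (simp add: RG_cat_def)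
  also have "\<dots> = lG e e e"
  proof (rule the_equality)
    show "\<exists>e'\<in>idems. Rcl e = Rcl e' \<and> lG e e e = lG e' e' e'" using a by blast
  next
    fix m assume "\<exists>e'\<in>idems. Rcl e = Rcl e' \<and> m = lG e' e' e'"
    then obtain e' where b: "e'\<in>idems" "Rcl e = Rcl e'" "m = lG e' e' e'" by blast
    have t: "(e,e,e) \<in> RGtrip" "(e',e',e') \<in> RGtrip" using a b(1) by (auto simp: RGtrip_mem idemsD)
    have "e'*e = e" "e*e' = e'" using Rcl_eq[OF a b(1)] b(2) by auto
    then show "m = lG e e e" using b(3) lG_eq[OF t(2,1)] by simp
  qed
  finally show ?thesis .
qed


lemma LG_trip_comp: assumes "(e,u,f) \<in> LGtrip" "(f,v,g) \<in> LGtrip" shows "(e,u*v,g) \<in> LGtrip"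
proof -
  have "e*u = u" "v*g = v" using assms by (auto simp: LGtrip_mem)
  then have "e*(u*v) = u*v" "(u*v)*g = u*v" by (metis mult.assoc)+
  then show ?thesis using assms by (auto simp: LGtrip_mem)
qed

lemma RG_trip_comp: assumes "(e,u,f) \<in> RGtrip" "(f,v,g) \<in> RGtrip" shows "(e,v*u,g) \<in> RGtrip"
proof -
  have "u*e = u" "g*v = v" using assms by (auto simp: RGtrip_mem)
  then have "(v*u)*e = v*u" "g*(v*u) = v*u" by (metis mult.assoc)+
  then show ?thesis using assms by (auto simp: RGtrip_mem)
qed

lemma LG_Comp: assumes a: "(e,u,f) \<in> LGtrip" and b: "(f,v,g) \<in> LGtrip"
  shows "Comp LG_cat (rG e u f) (rG f v g) = rG e (u*v) g"
proof -
  have "Comp LG_cat (rG e u f) (rG f v g) = (THE k. \<exists>e1 u1 f1 v1 g1. (e1, u1, f1) \<in> LGtrip \<and> (f1, v1, g1) \<in> LGtrip \<and>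
               rG e u f = rG e1 u1 f1 \<and> rG f v g = rG f1 v1 g1 \<and> k = rG e1 (u1 * v1) g1)"
    by (simp add: LG_cat_def)
  also have "\<dots> = rG e (u*v) g"
  proof (rule the_equality)
    show "\<exists>e1 u1 f1 v1 g1. (e1, u1, f1) \<in> LGtrip \<and> (f1, v1, g1) \<in> LGtrip \<and>
               rG e u f = rG e1 u1 f1 \<and> rG f v g = rG f1 v1 g1 \<and> rG e (u*v) g = rG e1 (u1 * v1) g1"
      using a b by blast
  next
    fix k assume "\<exists>e1 u1 f1 v1 g1. (e1, u1, f1) \<in> LGtrip \<and> (f1, v1, g1) \<in> LGtrip \<and>
               rG e u f = rG e1 u1 f1 \<and> rG f v g = rG f1 v1 g1 \<and> k = rG e1 (u1 * v1) g1"
    then obtain e1 u1 f1 v1 g1 where c: "(e1, u1, f1) \<in> LGtrip" "(f1, v1, g1) \<in> LGtrip"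
      "rG e u f = rG e1 u1 f1" "rG f v g = rG f1 v1 g1" "k = rG e1 (u1 * v1) g1" by blast
    have c1: "e*e1 = e" "e1*e = e1" "f*f1 = f" "f1*f = f1" "u = e*u1" using rG_eq[OF a c(1)] c(3) by auto
    have c2: "g*g1 = g" "g1*g = g1" "v = f*v1" using rG_eq[OF b c(2)] c(4) by auto
    have t: "e1*u1 = u1" "u1*f1 = u1" using c(1) by (auto simp: LGtrip_mem)
    have s1: "e1*u = u1" using c1 t by (metis mult.assoc)
    have s2: "u1*f = u1" using c1 t by (metis mult.assoc)
    have s3: "u1*v1 = e1*(u*v)" using s1 s2 c2 by (metis mult.assoc)
    have "rG e1 (u1 * v1) g1 = rG e (u*v) g"
      using rG_eq[OF LG_trip_comp[OF c(1,2)] LG_trip_comp[OF a b]] c1 c2 s3 by simp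
    then show "k = rG e (u*v) g" using c(5) by simp
  qed
  finally show ?thesis .
qed

lemma RG_Comp: assumes a: "(e,u,f) \<in> RGtrip" and b: "(f,v,g) \<in> RGtrip"
  shows "Comp RG_cat (lG e u f) (lG f v g) = lG e (v*u) g"
proof -
  have "Comp RG_cat (lG e u f) (lG f v g) = (THE k. \<exists>e1 u1 f1 v1 g1. (e1, u1, f1) \<in> RGtrip \<and> (f1, v1, g1) \<in> RGtrip \<and>
               lG e u f = lG e1 u1 f1 \<and> lG f v g = lG f1 v1 g1 \<and> k = lG e1 (v1 * u1) g1)"
    by (simp add: RG_cat_def)
  also have "\<dots> = lG e (v*u) g"
  proof (rule the_equality)
    show "\<exists>e1 u1 f1 v1 g1. (e1, u1, f1) \<in> RGtrip \<and> (f1, v1, g1) \<in> RGtrip \<and>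
               lG e u f = lG e1 u1 f1 \<and> lG f v g = lG f1 v1 g1 \<and> lG e (v*u) g = lG e1 (v1 * u1) g1"
      using a b by blast
  next
    fix k assume "\<exists>e1 u1 f1 v1 g1. (e1, u1, f1) \<in> RGtrip \<and> (f1, v1, g1) \<in> RGtrip \<and>
               lG e u f = lG e1 u1 f1 \<and> lG f v g = lG f1 v1 g1 \<and> k = lG e1 (v1 * u1) g1"
    then obtain e1 u1 f1 v1 g1 where c: "(e1, u1, f1) \<in> RGtrip" "(f1, v1, g1) \<in> RGtrip"
      "lG e u f = lG e1 u1 f1" "lG f v g = lG f1 v1 g1" "k = lG e1 (v1 * u1) g1" by blast
    have c1: "e1*e = e" "e*e1 = e1" "f1*f = f" "f*f1 = f1" "u = u1*e" using lG_eq[OF a c(1)] c(3) by auto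
    have c2: "g1*g = g" "g*g1 = g1" "v = v1*f" using lG_eq[OF b c(2)] c(4) by auto
    have t: "u1*e1 = u1" "f1*u1 = u1" using c(1) by (auto simp: RGtrip_mem)
    have s1: "u*e1 = u1" using c1 t by (metis mult.assoc)
    have s2: "f*u1 = u1" using c1 t by (metis mult.assoc)
    have s3: "v1*u1 = (v*u)*e1" using s1 s2 c2 by (metis mult.assoc)
    have "lG e1 (v1 * u1) g1 = lG e (v*u) g"
      using lG_eq[OF RG_trip_comp[OF c(1,2)] RG_trip_comp[OF a b]] c1 c2 s3 by simp
    then show "k = lG e (v*u) g" using c(5) by simp
  qed
  finally show ?thesis .
qed

lemma mcomp_rho: assumes a: "(e,u,f) \<in> LGtrip" and b: "(f,v,g) \<in> LGtrip"
  shows "mcomp (rhoS e u f) (rhoS f v g) = rhoS e (u*v) g"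
proof -
  have ie: "e \<in> idems" "f \<in> idems" "u*f = u" using a by (auto simp: LGtrip_mem)
  have "restrict (\<lambda>t. restrict (\<lambda>t. t*v) (lideal f) (restrict (\<lambda>t. t*u) (lideal e) t)) (lideal e)
        = restrict (\<lambda>t. t*(u*v)) (lideal e)"
  proof (rule restrict_ext)
    fix t assume t: "t \<in> lideal e"
    have "(t*u)*f = t*u" using ie by (simp add: mult.assoc)
    then have "t*u \<in> lideal f" using ie lideal_mem by blast
    then show "restrict (\<lambda>t. t*v) (lideal f) (restrict (\<lambda>t. t*u) (lideal e) t) = t*(u*v)"
      using t by (simp add: mult.assoc)
  qed
  then show ?thesis by (simp add: mcomp_def rhoS_def)
qed

lemma mcomp_lam: assumes a: "(e,u,f) \<in> RGtrip" and b: "(f,v,g) \<in> RGtrip"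
  shows "mcomp (lamS e u f) (lamS f v g) = lamS e (v*u) g"
proof -
  have ie: "e \<in> idems" "f \<in> idems" "f*u = u" using a by (auto simp: RGtrip_mem)
  have "restrict (\<lambda>t. restrict (\<lambda>t. v*t) (rideal f) (restrict (\<lambda>t. u*t) (rideal e) t)) (rideal e)
        = restrict (\<lambda>t. (v*u)*t) (rideal e)"
  proof (rule restrict_ext)
    fix t assume t: "t \<in> rideal e"
    have "f*(u*t) = u*t" using ie by (simp add: mult.assoc[symmetric])
    then have "u*t \<in> rideal f" using ie rideal_mem by blast
    then show "restrict (\<lambda>t. v*t) (rideal f) (restrict (\<lambda>t. u*t) (rideal e) t) = (v*u)*t"
      using t by (simp add: mult.assoc)
  qed
  then show ?thesis by (simp add: mcomp_def lamS_def)
qed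

lemma rho_incl: assumes "e \<in> idems" "f \<in> idems"
  shows "rhoS e e f = (lideal e, lideal f, restrict id (lideal e))"
proof -
  have "restrict (\<lambda>t. t*e) (lideal e) = restrict id (lideal e)"
    by (rule restrict_ext) (use assms lideal_mem in auto)
  then show ?thesis by (simp add: rhoS_def)
qed

lemma lam_incl: assumes "e \<in> idems" "f \<in> idems"
  shows "lamS e e f = (rideal e, rideal f, restrict id (rideal e))"
proof -
  have "restrict (\<lambda>t. e*t) (rideal e) = restrict id (rideal e)"
    by (rule restrict_ext) (use assms rideal_mem in auto)
  then show ?thesis by (simp add: lamS_def)
qed


lemma iso_L: "iso_ncat (LG_cat :: ('a::semigroup_mult set, _) ncat) LS_cat Lob Lar"
proof -
  have B1: "bij_betw Lob (Ob (LG_cat::('a set, _) ncat)) (Ob LS_cat)"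
    unfolding bij_betw_def LG_simps LS_simps
  proof
    show "inj_on Lob (Lcl ` (idems::'a set))"
    proof (rule inj_onI, clarify)
      fix e g :: 'a assume h: "e \<in> idems" "g \<in> idems" "Lob (Lcl e) = Lob (Lcl g)"
      then show "Lcl e = Lcl g" using Lob_eq lideal_eq Lcl_eq by metis
    qed
    show "Lob ` Lcl ` (idems::'a set) = lideal ` idems"
      unfolding image_image using Lob_eq by (rule image_cong[OF refl])
  qed
  have B2: "bij_betw Lar (Ar (LG_cat::('a set, _) ncat)) (Ar LS_cat)"
    unfolding bij_betw_def LG_simps LS_simps
  proof
    show "inj_on Lar {rG e u f |e u f. (e::'a, u, f) \<in> LGtrip}"
    proof (rule inj_onI, clarify)
      fix e u f g v h :: 'a assume h: "(e,u,f) \<in> LGtrip" "(g,v,h) \<in> LGtrip" "Lar (rG e u f) = Lar (rG g v h)"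
      then show "rG e u f = rG g v h" using Lar_eq rG_eq[OF h(1,2)] rhoS_eq[OF h(1,2)] by metis
    qed
    show "Lar ` {rG e u f |e u f. (e::'a, u, f) \<in> LGtrip} = {rhoS e u f |e u f. (e, u, f) \<in> LGtrip}"
    proof
      show "Lar ` {rG e u f |e u f. (e::'a, u, f) \<in> LGtrip} \<subseteq> {rhoS e u f |e u f. (e, u, f) \<in> LGtrip}"
        using Lar_eq by fastforce
      show "{rhoS e u f |e u f. (e, u, f) \<in> LGtrip} \<subseteq> Lar ` {rG e u f |e u f. (e::'a, u, f) \<in> LGtrip}"
      proof
        fix x assume "x \<in> {rhoS e u f |e u f. (e::'a, u, f) \<in> LGtrip}"
        then obtain e u f where h: "x = rhoS e u f" "(e,u,f) \<in> LGtrip" by blast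
        then have "x = Lar (rG e u f)" "rG e u f \<in> {rG e u f |e u f. (e::'a, u, f) \<in> LGtrip}"
          using Lar_eq[OF h(2)] by auto
        then show "x \<in> Lar ` {rG e u f |e u f. (e::'a, u, f) \<in> LGtrip}" by blast
      qed
    qed
  qed
  have B3: "\<forall>m\<in>Ar (LG_cat::('a set, _) ncat). cDom LS_cat (Lar m) = Lob (cDom LG_cat m) \<and> cCod LS_cat (Lar m) = Lob (cCod LG_cat m)"
    unfolding LG_simps LS_simps
  proof clarify
    fix e u f :: 'a assume a: "(e,u,f) \<in> LGtrip"
    then have "e \<in> idems" "f \<in> idems" by (auto simp: LGtrip_mem)
    then show "fst (Lar (rG e u f)) = Lob (cDom LG_cat (rG e u f)) \<and> fst (snd (Lar (rG e u f))) = Lob (cCod LG_cat (rG e u f))"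
      using a by (simp add: Lar_eq LG_Dom LG_Cod Lob_eq rhoS_def)
  qed
  have B4: "\<forall>c\<in>Ob (LG_cat::('a set, _) ncat). Lar (Idm LG_cat c) = Idm LS_cat (Lob c)"
    unfolding LG_simps LS_simps
  proof clarify
    fix e :: 'a assume a: "e \<in> idems"
    then have t: "(e,e,e) \<in> LGtrip" by (simp add: LGtrip_mem idemsD)
    show "Lar (Idm LG_cat (Lcl e)) = (Lob (Lcl e), Lob (Lcl e), restrict id (Lob (Lcl e)))"
      using a t by (simp add: LG_Idm Lar_eq Lob_eq rho_incl)
  qed
  have B5: "\<forall>m\<in>Ar (LG_cat::('a set, _) ncat). \<forall>n\<in>Ar LG_cat. cCod LG_cat m = cDom LG_cat n \<longrightarrow> Lar (Comp LG_cat m n) = Comp LS_cat (Lar m) (Lar n)"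
    unfolding LG_simps LS_simps
  proof clarify
    fix e u f f' v g :: 'a assume a: "(e,u,f) \<in> LGtrip" and b: "(f',v,g) \<in> LGtrip"
      and c: "cCod LG_cat (rG e u f) = cDom LG_cat (rG f' v g)"
    have ie: "f \<in> idems" "f' \<in> idems" "f' * v = v" "v*g = v" "g \<in> idems" using a b by (auto simp: LGtrip_mem)
    have "Lcl f = Lcl f'" using c LG_Dom[OF b] LG_Cod[OF a] by simp
    then have ff: "f*f' = f" "f'*f = f'" using Lcl_eq ie by auto
    have "f*(f*v) = f*v" using idemsD[OF ie(1)] by (simp add: mult.assoc[symmetric])
    moreover have "(f*v)*g = f*v" using ie by (simp add: mult.assoc)
    ultimately have b': "(f, f*v, g) \<in> LGtrip" using ie by (auto simp: LGtrip_mem)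
    have fv: "v = f'*(f*v)" using ff ie by (metis mult.assoc)
    have n: "rG f' v g = rG f (f*v) g" using rG_eq[OF b b'] ff fv ie idemsD by auto
    show "Lar (Comp LG_cat (rG e u f) (rG f' v g)) = mcomp (Lar (rG e u f)) (Lar (rG f' v g))"
      unfolding n using LG_Comp[OF a b'] Lar_eq[OF a] Lar_eq[OF b'] Lar_eq[OF LG_trip_comp[OF a b']]
        mcomp_rho[OF a b'] by simp
  qed
  have B6: "\<forall>m\<in>Incl (LG_cat::('a set, _) ncat). Lar m \<in> Incl LS_cat"
    unfolding LG_simps LS_simps
  proof clarify
    fix e f :: 'a assume h: "e \<in> idems" "f \<in> idems" "e*f = e"
    then have t: "(e,e,f) \<in> LGtrip" by (simp add: LGtrip_mem idemsD)
    have "lideal e \<subseteq> lideal f" using h lideal_sub by blast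
    then show "\<exists>e' f'. Lar (rG e e f) = (lideal e', lideal f', restrict id (lideal e')) \<and> e' \<in> idems \<and> f' \<in> idems \<and> lideal e' \<subseteq> lideal f'"
      using h t Lar_eq rho_incl by metis
  qed
  have B7: "\<forall>m\<in>Ar (LG_cat::('a set, _) ncat). Lar m \<in> Incl LS_cat \<longrightarrow> m \<in> Incl LG_cat"
    unfolding LG_simps LS_simps
  proof (intro ballI impI)
    fix m assume "m \<in> {rG e u f |e u f. (e::'a, u, f) \<in> LGtrip}"
    then obtain e u f where a: "(e,u,f) \<in> LGtrip" and me: "m = rG e u f" by blast
    assume "Lar m \<in> {(lideal e, lideal f, restrict id (lideal e)) |e f. e \<in> idems \<and> f \<in> idems \<and> lideal e \<subseteq> lideal f}"
    then obtain e' f' where h: "Lar (rG e u f) = (lideal e', lideal f', restrict id (lideal e'))" "e' \<in> idems" "f' \<in> idems" "lideal e' \<subseteq> lideal f'"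
      using me by blast
    have ie: "e \<in> idems" "f \<in> idems" "e*u = u" using a by (auto simp: LGtrip_mem)
    have r: "rhoS e u f = (lideal e', lideal f', restrict id (lideal e'))" using h Lar_eq[OF a] by simp
    then have l: "lideal e = lideal e'" "lideal f = lideal f'" "restrict (\<lambda>t. t*u) (lideal e) = restrict id (lideal e')"
      by (auto simp: rhoS_def)
    have em: "e \<in> lideal e" using ie idemsD lideal_mem by blast
    have "restrict (\<lambda>t. t*u) (lideal e) e = restrict id (lideal e') e" using l(3) by simp
    then have "e*u = e" using em l(1) by simp
    then have ue: "u = e" using ie by simp
    have "e*f = e" using em h(4) l ie lideal_mem by blast
    then show "m \<in> {rG e e f |e f. e \<in> idems \<and> f \<in> idems \<and> e * f = e}" using ue ie me by blast
  qed
  show ?thesis unfolding iso_ncat_def using B1 B2 B3 B4 B5 B6 B7 by blast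
qed


lemma iso_R: "iso_ncat (RG_cat :: ('a::semigroup_mult set, _) ncat) RS_cat Rob Rar"
proof -
  have B1: "bij_betw Rob (Ob (RG_cat::('a set, _) ncat)) (Ob RS_cat)"
    unfolding bij_betw_def RG_simps RS_simps
  proof
    show "inj_on Rob (Rcl ` (idems::'a set))"
    proof (rule inj_onI, clarify)
      fix e g :: 'a assume h: "e \<in> idems" "g \<in> idems" "Rob (Rcl e) = Rob (Rcl g)"
      then show "Rcl e = Rcl g" using Rob_eq rideal_eq Rcl_eq by metis
    qed
    show "Rob ` Rcl ` (idems::'a set) = rideal ` idems"
      unfolding image_image using Rob_eq by (rule image_cong[OF refl])
  qed
  have B2: "bij_betw Rar (Ar (RG_cat::('a set, _) ncat)) (Ar RS_cat)"
    unfolding bij_betw_def RG_simps RS_simps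
  proof
    show "inj_on Rar {lG e u f |e u f. (e::'a, u, f) \<in> RGtrip}"
    proof (rule inj_onI, clarify)
      fix e u f g v h :: 'a assume h: "(e,u,f) \<in> RGtrip" "(g,v,h) \<in> RGtrip" "Rar (lG e u f) = Rar (lG g v h)"
      then show "lG e u f = lG g v h" using Rar_eq lG_eq[OF h(1,2)] lamS_eq[OF h(1,2)] by metis
    qed
    show "Rar ` {lG e u f |e u f. (e::'a, u, f) \<in> RGtrip} = {lamS e u f |e u f. (e, u, f) \<in> RGtrip}"
    proof
      show "Rar ` {lG e u f |e u f. (e::'a, u, f) \<in> RGtrip} \<subseteq> {lamS e u f |e u f. (e, u, f) \<in> RGtrip}"
        using Rar_eq by fastforce
      show "{lamS e u f |e u f. (e, u, f) \<in> RGtrip} \<subseteq> Rar ` {lG e u f |e u f. (e::'a, u, f) \<in> RGtrip}"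
      proof
        fix x assume "x \<in> {lamS e u f |e u f. (e::'a, u, f) \<in> RGtrip}"
        then obtain e u f where h: "x = lamS e u f" "(e,u,f) \<in> RGtrip" by blast
        then have "x = Rar (lG e u f)" "lG e u f \<in> {lG e u f |e u f. (e::'a, u, f) \<in> RGtrip}"
          using Rar_eq[OF h(2)] by auto
        then show "x \<in> Rar ` {lG e u f |e u f. (e::'a, u, f) \<in> RGtrip}" by blast
      qed
    qed
  qed
  have B3: "\<forall>m\<in>Ar (RG_cat::('a set, _) ncat). cDom RS_cat (Rar m) = Rob (cDom RG_cat m) \<and> cCod RS_cat (Rar m) = Rob (cCod RG_cat m)"
    unfolding RG_simps RS_simps
  proof clarify
    fix e u f :: 'a assume a: "(e,u,f) \<in> RGtrip"
    then have "e \<in> idems" "f \<in> idems" by (auto simp: RGtrip_mem)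
    then show "fst (Rar (lG e u f)) = Rob (cDom RG_cat (lG e u f)) \<and> fst (snd (Rar (lG e u f))) = Rob (cCod RG_cat (lG e u f))"
      using a by (simp add: Rar_eq RG_Dom RG_Cod Rob_eq lamS_def)
  qed
  have B4: "\<forall>c\<in>Ob (RG_cat::('a set, _) ncat). Rar (Idm RG_cat c) = Idm RS_cat (Rob c)"
    unfolding RG_simps RS_simps
  proof clarify
    fix e :: 'a assume a: "e \<in> idems"
    then have t: "(e,e,e) \<in> RGtrip" by (simp add: RGtrip_mem idemsD)
    show "Rar (Idm RG_cat (Rcl e)) = (Rob (Rcl e), Rob (Rcl e), restrict id (Rob (Rcl e)))"
      using a t by (simp add: RG_Idm Rar_eq Rob_eq lam_incl)
  qed
  have B5: "\<forall>m\<in>Ar (RG_cat::('a set, _) ncat). \<forall>n\<in>Ar RG_cat. cCod RG_cat m = cDom RG_cat n \<longrightarrow> Rar (Comp RG_cat m n) = Comp RS_cat (Rar m) (Rar n)"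
    unfolding RG_simps RS_simps
  proof clarify
    fix e u f f' v g :: 'a assume a: "(e,u,f) \<in> RGtrip" and b: "(f',v,g) \<in> RGtrip"
      and c: "cCod RG_cat (lG e u f) = cDom RG_cat (lG f' v g)"
    have ie: "f \<in> idems" "f' \<in> idems" "v * f' = v" "g*v = v" "g \<in> idems" using a b by (auto simp: RGtrip_mem)
    have "Rcl f = Rcl f'" using c RG_Dom[OF b] RG_Cod[OF a] by simp
    then have ff: "f'*f = f" "f*f' = f'" using Rcl_eq ie by auto
    have "(v*f)*f = v*f" using idemsD[OF ie(1)] by (simp add: mult.assoc)
    moreover have "g*(v*f) = v*f" using ie by (simp add: mult.assoc[symmetric])
    ultimately have b': "(f, v*f, g) \<in> RGtrip" using ie by (auto simp: RGtrip_mem)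
    have fv: "v = (v*f)*f'" using ff ie by (metis mult.assoc)
    have n: "lG f' v g = lG f (v*f) g" using lG_eq[OF b b'] ff fv ie idemsD by auto
    show "Rar (Comp RG_cat (lG e u f) (lG f' v g)) = mcomp (Rar (lG e u f)) (Rar (lG f' v g))"
      unfolding n using RG_Comp[OF a b'] Rar_eq[OF a] Rar_eq[OF b'] Rar_eq[OF RG_trip_comp[OF a b']]
        mcomp_lam[OF a b'] by simp
  qed
  have B6: "\<forall>m\<in>Incl (RG_cat::('a set, _) ncat). Rar m \<in> Incl RS_cat"
    unfolding RG_simps RS_simps
  proof clarify
    fix e f :: 'a assume h: "e \<in> idems" "f \<in> idems" "f*e = e"
    then have t: "(e,e,f) \<in> RGtrip" by (simp add: RGtrip_mem idemsD)
    have "rideal e \<subseteq> rideal f" using h rideal_sub by blast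
    then show "\<exists>e' f'. Rar (lG e e f) = (rideal e', rideal f', restrict id (rideal e')) \<and> e' \<in> idems \<and> f' \<in> idems \<and> rideal e' \<subseteq> rideal f'"
      using h t Rar_eq lam_incl by metis
  qed
  have B7: "\<forall>m\<in>Ar (RG_cat::('a set, _) ncat). Rar m \<in> Incl RS_cat \<longrightarrow> m \<in> Incl RG_cat"
    unfolding RG_simps RS_simps
  proof (intro ballI impI)
    fix m assume "m \<in> {lG e u f |e u f. (e::'a, u, f) \<in> RGtrip}"
    then obtain e u f where a: "(e,u,f) \<in> RGtrip" and me: "m = lG e u f" by blast
    assume "Rar m \<in> {(rideal e, rideal f, restrict id (rideal e)) |e f. e \<in> idems \<and> f \<in> idems \<and> rideal e \<subseteq> rideal f}"
    then obtain e' f' where h: "Rar (lG e u f) = (rideal e', rideal f', restrict id (rideal e'))" "e' \<in> idems" "f' \<in> idems" "rideal e' \<subseteq> rideal f'"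
      using me by blast
    have ie: "e \<in> idems" "f \<in> idems" "u*e = u" using a by (auto simp: RGtrip_mem)
    have r: "lamS e u f = (rideal e', rideal f', restrict id (rideal e'))" using h Rar_eq[OF a] by simp
    then have l: "rideal e = rideal e'" "rideal f = rideal f'" "restrict (\<lambda>t. u*t) (rideal e) = restrict id (rideal e')"
      by (auto simp: lamS_def)
    have em: "e \<in> rideal e" using ie idemsD rideal_mem by blast
    have "restrict (\<lambda>t. u*t) (rideal e) e = restrict id (rideal e') e" using l(3) by simp
    then have "u*e = e" using em l(1) by simp
    then have ue: "u = e" using ie by simp
    have "f*e = e" using em h(4) l ie rideal_mem by blast
    then show "m \<in> {lG e e f |e f. e \<in> idems \<and> f \<in> idems \<and> f * e = e}" using ue ie me by blast
  qed
  show ?thesis unfolding iso_ncat_def using B1 B2 B3 B4 B5 B6 B7 by blast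
qed

lemma trip_ge: assumes "e \<in> idems" "g \<in> idems" shows "(g, g*e, e) \<in> LGtrip"
proof -
  have "g*(g*e) = g*e" using idemsD[OF assms(2)] by (simp add: mult.assoc[symmetric])
  moreover have "(g*e)*e = g*e" using idemsD[OF assms(1)] by (simp add: mult.assoc)
  ultimately show ?thesis using assms by (simp add: LGtrip_mem)
qed

lemma rcone_eq: assumes a: "e \<in> idems" "g \<in> idems" shows "rcone e (Lcl g) = rG g (g*e) e"
  unfolding rcone_def
proof (rule the_equality)
  show "\<exists>g'\<in>idems. Lcl g = Lcl g' \<and> rG g (g*e) e = rG g' (g'*e) e" using a by blast
next
  fix m assume "\<exists>g'\<in>idems. Lcl g = Lcl g' \<and> m = rG g' (g'*e) e"
  then obtain g' where b: "g'\<in>idems" "Lcl g = Lcl g'" "m = rG g' (g'*e) e" by blast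
  have gg: "g*g' = g" "g'*g = g'" using Lcl_eq[OF a(2) b(1)] b(2) by auto
  have t: "(g,g*e,e) \<in> LGtrip" "(g',g'*e,e) \<in> LGtrip" using a b(1) trip_ge by auto
  have "g'*e = g'*(g*e)" using gg by (simp add: mult.assoc[symmetric])
  then show "m = rG g (g*e) e" using b(3) rG_eq[OF t(2,1)] gg idemsD[OF a(1)] by simp
qed

lemma rhocone_eq: assumes a: "e \<in> idems" "g \<in> idems" shows "rhocone e (lideal g) = rhoS g (g*e) e"
  unfolding rhocone_def
proof (rule the_equality)
  show "\<exists>g'\<in>idems. lideal g = lideal g' \<and> rhoS g (g*e) e = rhoS g' (g'*e) e" using a by blast
next
  fix m assume "\<exists>g'\<in>idems. lideal g = lideal g' \<and> m = rhoS g' (g'*e) e"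
  then obtain g' where b: "g'\<in>idems" "lideal g = lideal g'" "m = rhoS g' (g'*e) e" by blast
  have gg: "g*g' = g" "g'*g = g'" using lideal_eq[OF a(2) b(1)] b(2) by auto
  have t: "(g,g*e,e) \<in> LGtrip" "(g',g'*e,e) \<in> LGtrip" using a b(1) trip_ge by auto
  have "g'*e = g'*(g*e)" using gg by (simp add: mult.assoc[symmetric])
  then show "m = rhoS g (g*e) e" using b(3) rhoS_eq[OF t(2,1)] gg idemsD[OF a(1)] by simp
qed


lemma transG_eq: assumes a: "e \<in> idems" "f \<in> idems" "u \<in> sandw e f"
  shows "transG e f (rG e u f) = lG f u e"
  unfolding transG_def
proof (rule the_equality)
  show "\<exists>u'\<in>sandw e f. rG e u f = rG e u' f \<and> lG f u e = lG f u' e" using a by blast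
next
  fix k assume "\<exists>u'\<in>sandw e f. rG e u f = rG e u' f \<and> k = lG f u' e"
  then obtain u' where b: "u' \<in> sandw e f" "rG e u f = rG e u' f" "k = lG f u' e" by blast
  have t: "(e,u,f) \<in> LGtrip" "(e,u',f) \<in> LGtrip" using a b(1) by (auto simp: LGtrip_def)
  have "e*u' = u'" using b(1) a sandw_mem by blast
  then have "u = u'" using rG_eq[OF t] b(2) by simp
  then show "k = lG f u e" using b(3) by simp
qed

lemma transS_eq: assumes a: "e \<in> idems" "f \<in> idems" "u \<in> sandw e f"
  shows "transS e f (rhoS e u f) = lamS f u e"
  unfolding transS_def
proof (rule the_equality)
  show "\<exists>u'\<in>sandw e f. rhoS e u f = rhoS e u' f \<and> lamS f u e = lamS f u' e" using a by blast
next
  fix k assume "\<exists>u'\<in>sandw e f. rhoS e u f = rhoS e u' f \<and> k = lamS f u' e"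
  then obtain u' where b: "u' \<in> sandw e f" "rhoS e u f = rhoS e u' f" "k = lamS f u' e" by blast
  have t: "(e,u,f) \<in> LGtrip" "(e,u',f) \<in> LGtrip" using a b(1) by (auto simp: LGtrip_def)
  have "e*u' = u'" using b(1) a sandw_mem by blast
  then have "u = u'" using rhoS_eq[OF t] b(2) by simp
  then show "k = lamS f u e" using b(3) by simp
qed

theorem mainTheorem19:
  fixes dummy :: "'a::semigroup_mult"
  assumes regular: "\<forall>a::'a. \<exists>x. a * x * a = a"
  shows "(\<forall>e\<in>(idems :: 'a set). Lob (Lcl e) = lideal e \<and> Rob (Rcl e) = rideal e)
    \<and> (\<forall>e u f. (e, u, f) \<in> (LGtrip :: ('a \<times> 'a \<times> 'a) set) \<longrightarrow> Lar (rG e u f) = rhoS e u f)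
    \<and> (\<forall>e u f. (e, u, f) \<in> (RGtrip :: ('a \<times> 'a \<times> 'a) set) \<longrightarrow> Rar (lG e u f) = lamS e u f)
    \<and> iso_ncat (LG_cat :: ('a set, _) ncat) LS_cat Lob Lar
    \<and> iso_ncat (RG_cat :: ('a set, _) ncat) RS_cat Rob Rar
    \<and> (\<forall>e\<in>(idems :: 'a set).
         (Lob (Lcl e), Rob (Rcl e)) = (lideal e, rideal e) \<and> (lideal e, rideal e) \<in> EGS \<and>
         (\<forall>g\<in>idems. Lar (rcone e (Lcl g)) = rhocone e (Lob (Lcl g))))
    \<and> (\<forall>e\<in>(idems :: 'a set). \<forall>f\<in>idems. \<forall>u\<in>sandw e f.
         Rar (transG e f (rG e u f)) = transS e f (Lar (rG e u f)))"
proof (intro conjI)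
  show "\<forall>e\<in>(idems :: 'a set). Lob (Lcl e) = lideal e \<and> Rob (Rcl e) = rideal e"
    using Lob_eq Rob_eq by blast
  show "\<forall>e u f. (e, u, f) \<in> (LGtrip :: ('a \<times> 'a \<times> 'a) set) \<longrightarrow> Lar (rG e u f) = rhoS e u f"
    using Lar_eq by blast
  show "\<forall>e u f. (e, u, f) \<in> (RGtrip :: ('a \<times> 'a \<times> 'a) set) \<longrightarrow> Rar (lG e u f) = lamS e u f"
    using Rar_eq by blast
  show "iso_ncat (LG_cat :: ('a set, _) ncat) LS_cat Lob Lar" by (rule iso_L)
  show "iso_ncat (RG_cat :: ('a set, _) ncat) RS_cat Rob Rar" by (rule iso_R)
  show "\<forall>e\<in>(idems :: 'a set).
         (Lob (Lcl e), Rob (Rcl e)) = (lideal e, rideal e) \<and> (lideal e, rideal e) \<in> EGS \<and>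
         (\<forall>g\<in>idems. Lar (rcone e (Lcl g)) = rhocone e (Lob (Lcl g)))"
  proof (intro ballI conjI)
    fix e :: 'a assume e: "e \<in> idems"
    show "(Lob (Lcl e), Rob (Rcl e)) = (lideal e, rideal e)" using Lob_eq[OF e] Rob_eq[OF e] by simp
    show "(lideal e, rideal e) \<in> EGS" using e unfolding EGS_def by blast
    fix g :: 'a assume g: "g \<in> idems"
    show "Lar (rcone e (Lcl g)) = rhocone e (Lob (Lcl g))"
      using e g by (simp add: rcone_eq Lar_eq trip_ge Lob_eq rhocone_eq)
  qed
  show "\<forall>e\<in>(idems :: 'a set). \<forall>f\<in>idems. \<forall>u\<in>sandw e f.
         Rar (transG e f (rG e u f)) = transS e f (Lar (rG e u f))"
  proof (intro ballI)
    fix e f u :: 'a assume h: "e \<in> idems" "f \<in> idems" "u \<in> sandw e f"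
    have t: "(e,u,f) \<in> LGtrip" "(f,u,e) \<in> RGtrip" using h by (auto simp: LGtrip_def RGtrip_def)
    show "Rar (transG e f (rG e u f)) = transS e f (Lar (rG e u f))"
      using transG_eq[OF h] transS_eq[OF h] Lar_eq[OF t(1)] Rar_eq[OF t(2)] by simp
  qed
qed

end
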